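(* Let $\mathbf{c}\in\mathbb{R}^n$, $\mathcal{K}=\{1,\dots,K\}$, and for each $k\in\mathcal{K}$ let $\mathcal{F}_k=\bigcup_{i\in\mathcal{D}_k}\mathcal{C}_{ki}$ with $\mathcal{D}_k$ finite and each $\mathcal{C}_{ki}\subset\mathbb{R}^n$ compact and convex. Let $z^*=\min\{\mathbf{c}^\top\mathbf{x}:\mathbf{x}\in\bigcap_{k\in\mathcal{K}}\mathcal{F}_k\}$. Let $\boldsymbol{\lambda}_1,\dots,\boldsymbol{\lambda}_K\in\mathbb{R}^n$ satisfy $\sum_{k\in\mathcal{K}}\boldsymbol{\lambda}_k=\mathbf{c}$. Let $\mathcal{P}=\{\mathcal{J}_1,\dots,\mathcal{J}_P\}$ be a partition of $\mathcal{K}$, let $\mathcal{Q}=\{1,\dots,P\}$, and for $q\in\mathcal{Q}$ let $\mathcal{F}_q'=\bigcap_{k\in\mathcal{J}_q}\mathcal{F}_k$, written in disjunctive normal form as the union of the compact convex sets $\bigcap_{k\in\mathcal{J}_q}\mathcal{C}_{k,i_k}$ over all choices $(i_k)_{k\in\mathcal{J}_q}\in\prod_{k\in\mathcal{J}_q}\mathcal{D}_k$. Define $$z^{HR}_{\mathcal{Q}}=\inf\{\mathbf{c}^\top\mathbf{x}:\ \mathbf{x}=\mathbf{v}_q,\ \mathbf{v}_q\in\operatorname{cl}\operatorname{conv}(\mathcal{F}'_q)\ \forall q\in\mathcal{Q}\},$$ $$z^{LD}_{\mathcal{Q}}=\sup_{\boldsymbol{\mu}_1,\dots,\boldsymbol{\mu}_P\in\mathbb{R}^n}\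 \inf\Big\{\big(\mathbf{c}-\textstyle\sum_q\boldsymbol{\mu}_q\big)^\top\mathbf{x}+\sum_q\boldsymbol{\mu}_q^\top\mathbf{v}_q:\ \mathbf{x}\in\mathbb{R}^n,\ \mathbf{v}_q\in\mathcal{F}'_q\ \forall q\Big\}.$$ Then $$z^*=L_{\{\mathcal{K}\}}\Big(\sum_{k\in\mathcal{K}}\boldsymbol{\lambda}_k\Big)\ \ge\ z^{HR}_{\mathcal{Q}}\ \ge\ z^{LD}_{\mathcal{Q}}\ \ge\ L_{\mathcal{P}}\Big(\sum_{j\in\mathcal{J}_1}\boldsymbol{\lambda}_j,\dots,\sum_{j\in\mathcal{J}_P}\boldsymbol{\lambda}_j\Big)\ \ge\ LR_{\mathcal{K}}(\boldsymbol{\lambda}_1,\dots,\boldsymbol{\lambda}_K),$$ with $z^{HR}_{\mathcal{Q}}=z^{LD}_{\mathcal{Q}}$ if optimal Lagrange multipliers $\boldsymbol{\mu}_1^*,\dots,\boldsymbol{\mu}_P^*$ for the constraints $\mathbf{x}=\mathbf{v}_q$ of the hull relaxation defining $z^{HR}_{\mathcal{Q}}$ exist.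
   Context: $\operatorname{cl}\operatorname{conv}$ is the closed convex hull; minima/infima over the empty set are $+\infty$. The Lagrangian relaxation is $LR_{\mathcal{K}}(\boldsymbol{\lambda}_1,\dots,\boldsymbol{\lambda}_K)=\inf\{(\mathbf{c}-\sum_k\boldsymbol{\lambda}_k)^\top\mathbf{x}+\sum_k\boldsymbol{\lambda}_k^\top\mathbf{v}_k:\mathbf{x}\in\mathbb{R}^n,\ \mathbf{v}_k\in\mathcal{F}_k\ \forall k\}$. For a partition $\mathcal{P}=\{\mathcal{J}_1,\dots,\mathcal{J}_P\}$ of $\mathcal{K}$ and $\boldsymbol{\mu}_p\in\mathbb{R}^n$, the partition relaxation is $L_{\mathcal{P}}(\boldsymbol{\mu}_1,\dots,\boldsymbol{\mu}_P)=\sum_{p=1}^P\min\{\boldsymbol{\mu}_p^\top\mathbf{v}:\mathbf{v}\in\bigcap_{k\in\mathcal{J}_p}\mathcal{F}_k\}$; in particular $L_{\{\mathcal{K}\}}(\boldsymbol{\mu})=\min\{\boldsymbol{\mu}^\top\mathbf{v}:\mathbf{v}\in\bigcap_{k\in\mathcal{K}}\mathcal{F}_k\}$. Optimal Lagrange multipliers $\boldsymbol{\mu}^*_q$ of the hull relaxation means: $z^{HR}_{\mathcal{Q}}$ is finite and equals $\inf\{(\mathbf{c}-\sum_q\boldsymbol{\mu}_q^* )^\top\mathbf{x}+\sum_q\boldsymbol{\mu}_q^{*\top}\mathbf{v}_q:\mathbf{x}\in\mathbb{R}^n,\ \mathbf{v}_q\in\operatorname{cl}\operatorname{conv}(\mathcal{F}'_q)\}$.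 *)

theory Defs
  imports "HOL-Analysis.Analysis"
begin

text \<open>Index conventions: \<open>\<K> = {1..K}\<close>, \<open>\<Q> = {1..P}\<close>; families of vectors and sets are
  functions on \<open>nat\<close>, only their values at the relevant indices matter.
  All optimal values live in \<open>ereal\<close>; \<open>Inf {} = \<infinity>\<close>.\<close>

definition LR :: "'a::euclidean_space \<Rightarrow> nat \<Rightarrow> (nat \<Rightarrow> 'a set) \<Rightarrow> (nat \<Rightarrow> 'a) \<Rightarrow> ereal" where
  "LR c K F lam = Inf {ereal ((c - (\<Sum>k\<in>{1..K}. lam k)) \<bullet> x + (\<Sum>k\<in>{1..K}. lam k \<bullet> v k)) | x v.
      \<forall>k\<in>{1..K}. v k \<in> F k}"

definition Lpart :: "nat \<Rightarrow> (nat \<Rightarrow> nat set) \<Rightarrow> (nat \<Rightarrow> 'a::euclidean_space set) \<Rightarrow> (nat \<Rightarrow> 'a) \<Rightarrow> ereal" where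
  "Lpart P J F mu = (\<Sum>p\<in>{1..P}. Inf ((\<lambda>v. ereal (mu p \<bullet> v)) ` (\<Inter>k\<in>J p. F k)))"

definition Fq :: "(nat \<Rightarrow> nat set) \<Rightarrow> (nat \<Rightarrow> 'a set) \<Rightarrow> nat \<Rightarrow> 'a set" where
  "Fq J F q = (\<Inter>k\<in>J q. F k)"

definition zHR :: "'a::euclidean_space \<Rightarrow> nat \<Rightarrow> (nat \<Rightarrow> nat set) \<Rightarrow> (nat \<Rightarrow> 'a set) \<Rightarrow> ereal" where
  "zHR c P J F = Inf {ereal (c \<bullet> x) | x v.
      \<forall>q\<in>{1..P}. x = v q \<and> v q \<in> closure (convex hull (Fq J F q))}"

definition zLD :: "'a::euclidean_space \<Rightarrow> nat \<Rightarrow> (nat \<Rightarrow> nat set) \<Rightarrow> (nat \<Rightarrow> 'a set) \<Rightarrow> ereal" where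
  "zLD c P J F = (SUP mu \<in> UNIV.
      Inf {ereal ((c - (\<Sum>q\<in>{1..P}. mu q)) \<bullet> x + (\<Sum>q\<in>{1..P}. mu q \<bullet> v q)) | x v.
        \<forall>q\<in>{1..P}. v q \<in> Fq J F q})"

definition HR_optimal_multipliers :: "'a::euclidean_space \<Rightarrow> nat \<Rightarrow> (nat \<Rightarrow> nat set) \<Rightarrow> (nat \<Rightarrow> 'a set) \<Rightarrow> (nat \<Rightarrow> 'a) \<Rightarrow> bool" where
  "HR_optimal_multipliers c P J F mu \<longleftrightarrow>
     \<bar>zHR c P J F\<bar> \<noteq> \<infinity> \<and>
     zHR c P J F = Inf {ereal ((c - (\<Sum>q\<in>{1..P}. mu q)) \<bullet> x + (\<Sum>q\<in>{1..P}. mu q \<bullet> v q)) | x v.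
        \<forall>q\<in>{1..P}. v q \<in> closure (convex hull (Fq J F q))}"

end

theory Submission
  imports Defs
begin

lemma minim_ex:
  fixes S :: "'a::euclidean_space set"
  assumes "compact S" "S \<noteq> {}"
  shows "\<exists>v\<in>S. \<forall>w\<in>S. m \<bullet> v \<le> m \<bullet> w"
proof -
  have "continuous_on S (\<lambda>w. m \<bullet> w)" by (intro continuous_intros)
  then show ?thesis using continuous_attains_inf[OF assms, of "\<lambda>w. m \<bullet> w"] by blast
qed

lemma hull_ge:
  fixes S :: "'a::euclidean_space set"
  assumes "\<forall>w\<in>S. m \<bullet> v \<le> m \<bullet> w" "x \<in> closure (convex hull S)"
  shows "m \<bullet> v \<le> m \<bullet> x"
proof -
  have "S \<subseteq> {w. inner m w \<ge> m \<bullet> v}" using assms(1) by auto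
  then have "convex hull S \<subseteq> {w. inner m w \<ge> m \<bullet> v}"
    by (intro hull_minimal convex_halfspace_ge)
  then have "closure (convex hull S) \<subseteq> {w. inner m w \<ge> m \<bullet> v}"
    by (intro closure_minimal closed_halfspace_ge)
  then show ?thesis using assms(2) by auto
qed

lemma Inf_at_min:
  assumes "v \<in> S" "\<forall>w\<in>S. m \<bullet> v \<le> m \<bullet> w"
  shows "Inf ((\<lambda>w. ereal (m \<bullet> w)) ` S) = ereal (m \<bullet> v)"
  using assms by (intro antisym INF_lower INF_greatest) auto

lemma part_sum:
  fixes P K :: nat and g :: "nat \<Rightarrow> 'b::comm_monoid_add"
  assumes J_disj: "\<forall>p\<in>{1..P}. \<forall>q\<in>{1..P}. p \<noteq> q \<longrightarrow> J p \<inter> J q = {}"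
    and J_cover: "(\<Union>q\<in>{1..P}. J q) = {1..K}"
  shows "(\<Sum>k\<in>{1..K}. g k) = (\<Sum>q\<in>{1..P}. \<Sum>k\<in>J q. g k)"
proof -
  have fin: "\<forall>q\<in>{1..P}. finite (J q)"
    using J_cover by (metis UN_upper finite_atLeastAtMost finite_subset)
  show ?thesis
    by (subst J_cover[symmetric], rule sum.UNION_disjoint) (use fin J_disj in simp_all)
qed

theorem corollary2:
  fixes c :: "'a::euclidean_space"
    and K P :: nat
    and D :: "nat \<Rightarrow> 'i set"
    and C :: "nat \<Rightarrow> 'i \<Rightarrow> 'a set"
    and F :: "nat \<Rightarrow> 'a set"
    and lam :: "nat \<Rightarrow> 'a"
    and J :: "nat \<Rightarrow> nat set"
    and zstar :: ereal
  assumes K_pos: "K \<ge> 1"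
    and D_fin: "\<forall>k\<in>{1..K}. finite (D k)"
    and C_cc: "\<forall>k\<in>{1..K}. \<forall>i\<in>D k. compact (C k i) \<and> convex (C k i)"
    and F_def: "\<forall>k\<in>{1..K}. F k = (\<Union>i\<in>D k. C k i)"
    and zstar_def: "zstar = Inf ((\<lambda>x. ereal (c \<bullet> x)) ` (\<Inter>k\<in>{1..K}. F k))"
    and lam_sum: "(\<Sum>k\<in>{1..K}. lam k) = c"
    and J_nonempty: "\<forall>q\<in>{1..P}. J q \<noteq> {}"
    and J_disj: "\<forall>p\<in>{1..P}. \<forall>q\<in>{1..P}. p \<noteq> q \<longrightarrow> J p \<inter> J q = {}"
    and J_cover: "(\<Union>q\<in>{1..P}. J q) = {1..K}"
  shows "zstar = Lpart 1 (\<lambda>_. {1..K}) F (\<lambda>_. \<Sum>k\<in>{1..K}. lam k)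
       \<and> Lpart 1 (\<lambda>_. {1..K}) F (\<lambda>_. \<Sum>k\<in>{1..K}. lam k) \<ge> zHR c P J F
       \<and> zHR c P J F \<ge> zLD c P J F
       \<and> zLD c P J F \<ge> Lpart P J F (\<lambda>q. \<Sum>j\<in>J q. lam j)
       \<and> Lpart P J F (\<lambda>q. \<Sum>j\<in>J q. lam j) \<ge> LR c K F lam
       \<and> ((\<exists>mu. HR_optimal_multipliers c P J F mu) \<longrightarrow> zHR c P J F = zLD c P J F)"
proof -
  have P_pos: "P \<ge> 1"
  proof (rule ccontr)
    assume "\<not> P \<ge> 1" then have "{1..P} = {}" by auto
    then show False using J_cover K_pos by auto
  qed
  have Jsub: "\<forall>q\<in>{1..P}. J q \<subseteq> {1..K}" using J_cover by blast
  have Fk_compact: "\<forall>k\<in>{1..K}. compact (F k)"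
    using F_def D_fin C_cc by (auto intro!: compact_UN)
  have Fq_compact: "\<forall>q\<in>{1..P}. compact (Fq J F q)"
  proof
    fix q assume q: "q \<in> {1..P}"
    then obtain k where k: "k \<in> J q" using J_nonempty by blast
    have "Fq J F q = F k \<inter> (\<Inter>k\<in>J q. F k)" using k unfolding Fq_def by blast
    moreover have "closed (\<Inter>k\<in>J q. F k)"
      using Jsub q Fk_compact by (intro closed_INT) (meson compact_imp_closed subsetD)
    ultimately show "compact (Fq J F q)"
      using Fk_compact k Jsub q by (metis compact_Int_closed subsetD)
  qed
  have Fq_sub: "\<forall>q\<in>{1..P}. \<forall>k\<in>J q. Fq J F q \<subseteq> F k" unfolding Fq_def by blast
  have L1: "Lpart 1 (\<lambda>_. {1..K}) F (\<lambda>_. \<Sum>k\<in>{1..K}. lam k)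
      = Inf ((\<lambda>x. ereal (c \<bullet> x)) ` (\<Inter>k\<in>{1..K}. F k))"
    unfolding Lpart_def lam_sum by simp
  have H2: "zHR c P J F \<le> Inf ((\<lambda>x. ereal (c \<bullet> x)) ` (\<Inter>k\<in>{1..K}. F k))"
    unfolding zHR_def
  proof (rule INF_greatest)
    fix x assume x: "x \<in> (\<Inter>k\<in>{1..K}. F k)"
    have "\<forall>q\<in>{1..P}. x = (\<lambda>_. x) q \<and> (\<lambda>_. x) q \<in> closure (convex hull (Fq J F q))"
    proof
      fix q assume q: "q \<in> {1..P}"
      have "x \<in> Fq J F q" using x Jsub q unfolding Fq_def by blast
      then show "x = (\<lambda>_. x) q \<and> (\<lambda>_. x) q \<in> closure (convex hull (Fq J F q))"
        by (meson closure_subset hull_inc subsetD)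
    qed
    note hx = this
    show "Inf {ereal (c \<bullet> x) | x v.
      \<forall>q\<in>{1..P}. x = v q \<and> v q \<in> closure (convex hull (Fq J F q))} \<le> ereal (c \<bullet> x)"
      apply (rule Inf_lower, rule CollectI)
      apply (rule exI[of _ x], rule exI[of _ "\<lambda>_. x"])
      using hx by simp
  qed
  have H3: "zLD c P J F \<le> zHR c P J F"
    unfolding zLD_def
  proof (rule SUP_least)
    fix mu :: "nat \<Rightarrow> 'a"
    show "Inf {ereal ((c - (\<Sum>q\<in>{1..P}. mu q)) \<bullet> x + (\<Sum>q\<in>{1..P}. mu q \<bullet> v q)) | x v.
        \<forall>q\<in>{1..P}. v q \<in> Fq J F q} \<le> zHR c P J F"
      unfolding zHR_def
    proof (rule Inf_greatest)
      fix y assume "y \<in> {ereal (c \<bullet> x) | x v.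
        \<forall>q\<in>{1..P}. x = v q \<and> v q \<in> closure (convex hull (Fq J F q))}"
      then obtain x v where y: "y = ereal (c \<bullet> x)"
        and xv: "\<forall>q\<in>{1..P}. x = v q \<and> v q \<in> closure (convex hull (Fq J F q))" by blast
      have "\<forall>q\<in>{1..P}. \<exists>w\<in>Fq J F q. \<forall>u\<in>Fq J F q. mu q \<bullet> w \<le> mu q \<bullet> u"
      proof
        fix q assume q: "q \<in> {1..P}"
        have "Fq J F q \<noteq> {}" using xv q by (metis closure_empty convex_hull_empty empty_iff)
        then show "\<exists>w\<in>Fq J F q. \<forall>u\<in>Fq J F q. mu q \<bullet> w \<le> mu q \<bullet> u"
          using minim_ex Fq_compact q by blast
      qed
      then obtain w where w: "\<forall>q\<in>{1..P}. w q \<in> Fq J F q \<and> (\<forall>u\<in>Fq J F q. mu q \<bullet> w q \<le> mu q \<bullet> u)"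
        by metis
      have le: "\<forall>q\<in>{1..P}. mu q \<bullet> w q \<le> mu q \<bullet> x"
        using w xv hull_ge by metis
      have "(\<Sum>q\<in>{1..P}. mu q \<bullet> w q) \<le> (\<Sum>q\<in>{1..P}. mu q \<bullet> x)"
        using le by (intro sum_mono) auto
      then have "(c - (\<Sum>q\<in>{1..P}. mu q)) \<bullet> x + (\<Sum>q\<in>{1..P}. mu q \<bullet> w q) \<le> c \<bullet> x"
        by (simp add: inner_diff_left inner_sum_left)
      moreover have "Inf {ereal ((c - (\<Sum>q\<in>{1..P}. mu q)) \<bullet> x + (\<Sum>q\<in>{1..P}. mu q \<bullet> v q)) | x v.
        \<forall>q\<in>{1..P}. v q \<in> Fq J F q} \<le> ereal ((c - (\<Sum>q\<in>{1..P}. mu q)) \<bullet> x + (\<Sum>q\<in>{1..P}. mu q \<bullet> w q))"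
        using w by (intro Inf_lower) blast
      ultimately show "Inf {ereal ((c - (\<Sum>q\<in>{1..P}. mu q)) \<bullet> x + (\<Sum>q\<in>{1..P}. mu q \<bullet> v q)) | x v.
        \<forall>q\<in>{1..P}. v q \<in> Fq J F q} \<le> y" using y by (meson ereal_less_eq(3) order_trans)
    qed
  qed
  define mu0 where "mu0 = (\<lambda>q. \<Sum>j\<in>J q. lam j)"
  have mu0_sum: "(\<Sum>q\<in>{1..P}. mu0 q) = c"
    unfolding mu0_def using part_sum[OF J_disj J_cover, of lam] lam_sum by simp
  have H4: "Lpart P J F mu0 \<le> zLD c P J F"
  proof -
    have "Lpart P J F mu0 \<le> Inf {ereal ((c - (\<Sum>q\<in>{1..P}. mu0 q)) \<bullet> x + (\<Sum>q\<in>{1..P}. mu0 q \<bullet> v q)) | x v.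
        \<forall>q\<in>{1..P}. v q \<in> Fq J F q}"
    proof (rule Inf_greatest)
      fix y assume "y \<in> {ereal ((c - (\<Sum>q\<in>{1..P}. mu0 q)) \<bullet> x + (\<Sum>q\<in>{1..P}. mu0 q \<bullet> v q)) | x v.
        \<forall>q\<in>{1..P}. v q \<in> Fq J F q}"
      then obtain x v where y: "y = ereal ((c - (\<Sum>q\<in>{1..P}. mu0 q)) \<bullet> x + (\<Sum>q\<in>{1..P}. mu0 q \<bullet> v q))"
        and v: "\<forall>q\<in>{1..P}. v q \<in> Fq J F q" by blast
      have "y = (\<Sum>q\<in>{1..P}. ereal (mu0 q \<bullet> v q))" using y mu0_sum by simp
      moreover have "Lpart P J F mu0 \<le> (\<Sum>q\<in>{1..P}. ereal (mu0 q \<bullet> v q))"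
        unfolding Lpart_def
        by (rule sum_mono, rule INF_lower) (use v in \<open>auto simp: Fq_def\<close>)
      ultimately show "Lpart P J F mu0 \<le> y" by simp
    qed
    also have "\<dots> \<le> zLD c P J F" unfolding zLD_def by (rule SUP_upper) simp
    finally show ?thesis .
  qed
  have H5: "LR c K F lam \<le> Lpart P J F mu0"
  proof (cases "\<exists>q\<in>{1..P}. Fq J F q = {}")
    case True
    then obtain q where q: "q \<in> {1..P}" "Fq J F q = {}" by blast
    have "Lpart P J F mu0 = \<infinity>"
      unfolding Lpart_def sum_Pinfty using q
      by (intro conjI finite_atLeastAtMost bexI[of _ q]) (auto simp: Fq_def top_ereal_def[symmetric])
    then show ?thesis by simp
  next
    case False
    have "\<forall>q\<in>{1..P}. \<exists>w\<in>Fq J F q. \<forall>u\<in>Fq J F q. mu0 q \<bullet> w \<le> mu0 q \<bullet> u"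
      using False minim_ex Fq_compact by blast
    then obtain w where w: "\<forall>q\<in>{1..P}. w q \<in> Fq J F q \<and> (\<forall>u\<in>Fq J F q. mu0 q \<bullet> w q \<le> mu0 q \<bullet> u)"
      by metis
    have Lp: "Lpart P J F mu0 = ereal (\<Sum>q\<in>{1..P}. mu0 q \<bullet> w q)"
    proof -
      have "Lpart P J F mu0 = (\<Sum>q\<in>{1..P}. ereal (mu0 q \<bullet> w q))"
        unfolding Lpart_def
        apply (rule sum.cong[OF refl])
        subgoal for q using w Inf_at_min[of "w q" "Fq J F q" "mu0 q"] by (simp add: Fq_def)
        done
      then show ?thesis by simp
    qed
    define qof where "qof k = (SOME q. q \<in> {1..P} \<and> k \<in> J q)" for k
    have qof: "qof k = q" if "q \<in> {1..P}" "k \<in> J q" for k q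
    proof -
      have "qof k \<in> {1..P} \<and> k \<in> J (qof k)"
        unfolding qof_def by (rule someI[of _ q]) (use that in auto)
      then show ?thesis using J_disj that by blast
    qed
    define vv where "vv k = w (qof k)" for k
    have vvF: "\<forall>k\<in>{1..K}. vv k \<in> F k"
    proof
      fix k assume "k \<in> {1..K}"
      then obtain q where q: "q \<in> {1..P}" "k \<in> J q" using J_cover by blast
      then show "vv k \<in> F k" using qof[OF q] w Fq_sub unfolding vv_def by blast
    qed
    have "(\<Sum>k\<in>{1..K}. lam k \<bullet> vv k) = (\<Sum>q\<in>{1..P}. \<Sum>k\<in>J q. lam k \<bullet> vv k)"
      by (rule part_sum[OF J_disj J_cover])
    also have "\<dots> = (\<Sum>q\<in>{1..P}. \<Sum>k\<in>J q. lam k \<bullet> w q)"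
      by (rule sum.cong[OF refl], rule sum.cong[OF refl]) (simp add: vv_def qof)
    also have "\<dots> = (\<Sum>q\<in>{1..P}. mu0 q \<bullet> w q)"
      by (simp add: mu0_def inner_sum_left)
    finally have eq: "(\<Sum>k\<in>{1..K}. lam k \<bullet> vv k) = (\<Sum>q\<in>{1..P}. mu0 q \<bullet> w q)" .
    have "LR c K F lam \<le> ereal ((c - (\<Sum>k\<in>{1..K}. lam k)) \<bullet> 0 + (\<Sum>k\<in>{1..K}. lam k \<bullet> vv k))"
      unfolding LR_def using vvF by (intro Inf_lower) blast
    then show ?thesis using eq Lp by simp
  qed
  have H6: "zHR c P J F = zLD c P J F" if ex_mu: "\<exists>mu. HR_optimal_multipliers c P J F mu"
  proof -
    obtain mu where mu: "HR_optimal_multipliers c P J F mu" using ex_mu by blast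
    have "zHR c P J F = Inf {ereal ((c - (\<Sum>q\<in>{1..P}. mu q)) \<bullet> x + (\<Sum>q\<in>{1..P}. mu q \<bullet> v q)) | x v.
        \<forall>q\<in>{1..P}. v q \<in> closure (convex hull (Fq J F q))}"
      using mu unfolding HR_optimal_multipliers_def by blast
    also have "\<dots> \<le> Inf {ereal ((c - (\<Sum>q\<in>{1..P}. mu q)) \<bullet> x + (\<Sum>q\<in>{1..P}. mu q \<bullet> v q)) | x v.
        \<forall>q\<in>{1..P}. v q \<in> Fq J F q}"
      apply (rule Inf_superset_mono)
      apply clarify
      apply (intro CollectI exI conjI)
       apply (rule refl)
      by (auto intro: subsetD[OF closure_subset] hull_inc)
    also have "\<dots> \<le> zLD c P J F" unfolding zLD_def by (rule SUP_upper) simp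
    finally show ?thesis using H3 by simp
  qed
  show ?thesis
    using L1 H2 H3 H4 H5 H6 zstar_def unfolding mu0_def by simp
qed

end
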